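(* Let $n\geq1$ and $\mathcal{P},\mathcal{Q}\in eNNC_{2n}$. Then $\langle\mathcal{P}\rangle=\langle\mathcal{Q}\rangle$ as subcategories of $\overline{\mathcal{C}}_n$ if and only if $\mathcal{P}=\mathcal{Q}$ up to relabelling of blocks.
   Context: Let $k$ be a field, $S$ the unit circle with anticlockwise orientation. Fix a discrete infinite subset $\mathscr{M}\subset S$ such that every limit point of $\mathscr{M}$ is a limit of both an increasing and a decreasing sequence of $\mathscr{M}$ in the cyclic order, with exactly $n$ such limit points (accumulation points) $a_1,\dots,a_n$ in cyclic order (indices mod $n$, $a_0=a_n$); put $\overline{\mathscr{M}}=\mathscr{M}\cup\{a_1,\dots,a_n\}$, and let $(a_i,a_{i+1})$ denote the points of $\mathscr{M}$ strictly between $a_i$ and $a_{i+1}$. Each $x\in\mathscr{M}$ has a cyclic predecessor $x^-$ and successor $x^+$ in $\mathscr{M}$; for accumulation points $a^\pm=a$. An arc of $\overline{\mathscr{M}}$ is an unordered pair $\{x_1,x_2\}\subset\overline{\mathscr{M}}$ with $x_2\ne x_1,x_1^-,x_1^+$; arcs cross if their endpoints strictly alternate cyclically; $\{x_1,x_2\}[1]=\{x_1^-,x_2^-\}$. The Paquette–Yıldırım category $\overline{\mathcal{C}}_n$ is a Hom-finite, $k$-linear, Krull–Schmidt triangulated category with suspension $[1]$ whose indecomposables $X$ correspond bijectively to arcs $\ell_X$ of $\overline{\mathscr{M}}$, with $\ell_{X[1]}=\ell_X[1]$, and $\mathrm{Hom}(X,Y)\cong k$ if $\ell_X$ and $\ell_Y[-1]$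 cross, or both have an endpoint at a common accumulation point with $\ell_Y[-1]$ an anticlockwise rotation of $\ell_X$ about it; $0$ otherwise. A non-exhaustive non-crossing partition of $[m]=\{1,\dots,m\}$ is a collection of pairwise disjoint nonempty subsets (blocks) of $[m]$, not necessarily covering $[m]$, such that whenever $i<k<j<l$ with $i,j$ in a block $B$ and $k,l$ in a block $B'$, $B=B'$. $eNNC_{2n}$ is the set of such partitions of $[2n]$ containing no block $\{i\}$ with $i$ even. For $\mathcal{P}\in eNNC_{2n}$, $\langle\mathcal{P}\rangle\subseteq\overline{\mathcal{C}}_n$ is the additive closure (closed under sums and summands) of indecomposables $X$ with $\ell_X=\{x,y\}$ such that for some block $B\in\mathcal{P}$, $x,y\in\bigcup_{p\in B,\,p\text{ odd}}(a_{(p-1)/2},a_{(p+1)/2})\cup\bigcup_{p\in B,\,p\text{ even}}\{a_{p/2}\}$. *)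

theory Defs
  imports Main "HOL-Library.Multiset"
begin

text \<open>Combinatorial model of \<open>\<overline>M\<close> with n accumulation points.
  Accumulation point a_i is \<open>Acc i\<close> (1 \<le> i \<le> n); the points of M strictly
  between a_(i-1) and a_i (with a_0 = a_n) are \<open>Mid i z\<close>, z an integer,
  ordered anticlockwise by z (each such interval is order-isomorphic to the integers,
  since every accumulation point is a two-sided limit of M and M is discrete).\<close>

datatype mpt = Acc nat | Mid nat int

definition Mbar :: "nat \<Rightarrow> mpt set" where
  "Mbar n = {Acc i | i. 1 \<le> i \<and> i \<le> n} \<union> {Mid i z | i z. 1 \<le> i \<and> i \<le> n}"

fun msucc :: "mpt \<Rightarrow> mpt" where
  "msucc (Acc i) = Acc i"
| "msucc (Mid i z) = Mid i (z + 1)"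

fun mpred :: "mpt \<Rightarrow> mpt" where
  "mpred (Acc i) = Acc i"
| "mpred (Mid i z) = Mid i (z - 1)"

definition is_arc :: "nat \<Rightarrow> mpt set \<Rightarrow> bool" where
  "is_arc n A \<longleftrightarrow> (\<exists>x y. A = {x, y} \<and> x \<in> Mbar n \<and> y \<in> Mbar n
      \<and> y \<noteq> x \<and> y \<noteq> mpred x \<and> y \<noteq> msucc x)"

definition NNC :: "nat \<Rightarrow> nat set set \<Rightarrow> bool" where
  "NNC m P \<longleftrightarrow>
     (\<forall>B\<in>P. B \<noteq> {} \<and> B \<subseteq> {1..m}) \<and>
     (\<forall>B\<in>P. \<forall>B'\<in>P. B \<noteq> B' \<longrightarrow> B \<inter> B' = {}) \<and>
     (\<forall>B\<in>P. \<forall>B'\<in>P. \<forall>i j k l. i < k \<and> k < j \<and> j < l \<and> i \<in> B \<and> j \<in> B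
         \<and> k \<in> B' \<and> l \<in> B' \<longrightarrow> B = B')"

definition eNNC :: "nat \<Rightarrow> nat set set set" where
  "eNNC m = {P. NNC m P \<and> (\<forall>i. even i \<longrightarrow> {i} \<notin> P)}"

text \<open>the region of \<open>\<overline>M\<close> attached to a block: odd p gives the interval
  (a_((p-1)/2), a_((p+1)/2)) = points Mid ((p+1)/2) z; even p gives a_(p/2)\<close>
definition region :: "nat set \<Rightarrow> mpt set" where
  "region B = {Mid ((p + 1) div 2) z | p z. p \<in> B \<and> odd p}
            \<union> {Acc (p div 2) | p. p \<in> B \<and> even p}"

text \<open>arcs of the indecomposables of \<open>\<langle>P\<rangle>\<close>\<close>
definition gen_arcs :: "nat \<Rightarrow> nat set set \<Rightarrow> mpt set set" where
  "gen_arcs n P = {A. is_arc n A \<and> (\<exists>B\<in>P. A \<subseteq> region B)}"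

text \<open>Objects of the Krull-Schmidt category up to isomorphism are finite multisets of
  indecomposables, i.e. of arcs. The additive closure \<open>\<langle>P\<rangle>\<close> (closed under
  sums and summands) consists of the objects all of whose indecomposable summands
  have arcs in gen_arcs.\<close>
definition subcat :: "nat \<Rightarrow> nat set set \<Rightarrow> mpt set multiset set" where
  "subcat n P = {X. \<forall>A\<in>#X. A \<in> gen_arcs n P}"

end

theory Submission
  imports Defs
begin

definition reg :: "nat \<Rightarrow> mpt set" where
  "reg p = region {p}"

definition pt :: "nat \<Rightarrow> mpt" where
  "pt p = (if odd p then Mid ((p + 1) div 2) 0 else Acc (p div 2))"

lemma reg_eq: "reg p = (if odd p then range (Mid ((p + 1) div 2)) else {Acc (p div 2)})"
  unfolding reg_def region_def by auto

lemma region_Un: "region B = (\<Union>p\<in>B. reg p)"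
  unfolding reg_def region_def by auto

lemma reg_disj:
  assumes "x \<in> reg p" "x \<in> reg q" shows "p = q"
proof (cases "odd p")
  case True
  then obtain z where "x = Mid ((p + 1) div 2) z" using assms(1) unfolding reg_eq by auto
  then have "odd q" and "(p + 1) div 2 = (q + 1) div 2"
    using assms(2) unfolding reg_eq by (auto split: if_splits)
  moreover obtain k where "p = 2 * k + 1" using True oddE by blast
  moreover obtain l where "q = 2 * l + 1" using \<open>odd q\<close> oddE by blast
  ultimately show ?thesis by simp
next
  case False
  then have "x = Acc (p div 2)" using assms(1) unfolding reg_eq by auto
  then have "even q" and "p div 2 = q div 2"
    using assms(2) unfolding reg_eq by (auto split: if_splits)
  moreover obtain k where "p = 2 * k" using False by blast
  moreover obtain l where "q = 2 * l" using \<open>even q\<close> by blast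
  ultimately show ?thesis by simp
qed

lemma pt_reg: "pt p \<in> reg p"
  unfolding pt_def reg_eq by auto

lemma reg_idx:
  assumes "x \<in> reg p" shows "(msucc x \<in> reg p) \<and> (mpred x \<in> reg p)"
  using assms unfolding reg_eq by (cases x) (auto split: if_splits)

lemma reg_Mbar:
  assumes "x \<in> reg p" "p \<in> {1..2*n}" shows "x \<in> Mbar n"
  using assms unfolding reg_eq Mbar_def by (auto split: if_splits; presburger)

lemma eNNC_NNC: "P \<in> eNNC m \<Longrightarrow> NNC m P"
  unfolding eNNC_def by (rule conjunct1) (rule CollectD)

lemma NNC_1: "NNC m P \<Longrightarrow> \<forall>B\<in>P. B \<noteq> {} \<and> B \<subseteq> {1..m}"
  unfolding NNC_def by (rule conjunct1)

lemma NNC_2: "NNC m P \<Longrightarrow> \<forall>B\<in>P. \<forall>B'\<in>P. B \<noteq> B' \<longrightarrow> B \<inter> B' = {}"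
  unfolding NNC_def by (rule conjunct1[OF conjunct2])

lemma eNNC_sub: "P \<in> eNNC m \<Longrightarrow> B \<in> P \<Longrightarrow> B \<noteq> {} \<and> B \<subseteq> {1..m}"
  using NNC_1[OF eNNC_NNC] by blast

lemma eNNC_disj: "P \<in> eNNC m \<Longrightarrow> B \<in> P \<Longrightarrow> B' \<in> P \<Longrightarrow> x \<in> B \<Longrightarrow> x \<in> B' \<Longrightarrow> B = B'"
  using NNC_2[OF eNNC_NNC] by blast

definition conn :: "mpt set set \<Rightarrow> nat \<Rightarrow> nat \<Rightarrow> bool" where
  "conn G p q \<longleftrightarrow> (\<exists>A\<in>G. A \<inter> reg p \<noteq> {} \<and> A \<inter> reg q \<noteq> {})"

lemma arc_two:
  assumes "x \<in> reg p" "y \<in> reg q" "p \<noteq> q" "p \<in> {1..2*n}" "q \<in> {1..2*n}"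
  shows "is_arc n {x, y}"
proof -
  have "y \<noteq> x" using assms reg_disj by blast
  moreover have "y \<noteq> mpred x" "y \<noteq> msucc x"
    using assms reg_disj reg_idx by metis+
  ultimately show ?thesis unfolding is_arc_def using reg_Mbar assms by blast
qed

lemma conn_fwd:
  assumes P: "P \<in> eNNC m" and B: "B \<in> P" "p \<in> B"
    and c: "conn (gen_arcs n P) p q"
  shows "q \<in> B"
proof -
  obtain A B' where A: "B' \<in> P" "A \<subseteq> region B'" "A \<inter> reg p \<noteq> {}" "A \<inter> reg q \<noteq> {}"
    using c unfolding conn_def gen_arcs_def by blast
  obtain x where x: "x \<in> A" "x \<in> reg p" using A by blast
  then obtain p' where "p' \<in> B'" "x \<in> reg p'" using A region_Un by blast
  then have "p \<in> B'" using x reg_disj by blast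
  then have "B' = B" using eNNC_disj[OF P A(1) B(1) _ B(2)] by simp
  obtain y where y: "y \<in> A" "y \<in> reg q" using A by blast
  then obtain q' where "q' \<in> B'" "y \<in> reg q'" using A region_Un by blast
  then have "q \<in> B'" using y reg_disj by blast
  with \<open>B' = B\<close> show ?thesis by simp
qed

lemma conn_intro:
  "A \<in> G \<Longrightarrow> x \<in> A \<Longrightarrow> x \<in> reg p \<Longrightarrow> y \<in> A \<Longrightarrow> y \<in> reg q \<Longrightarrow> conn G p q"
  unfolding conn_def by blast

lemma gen_intro: "is_arc n A \<Longrightarrow> B \<in> P \<Longrightarrow> A \<subseteq> region B \<Longrightarrow> A \<in> gen_arcs n P"
  unfolding gen_arcs_def by blast

lemma conn_bwd:
  assumes P: "P \<in> eNNC (2*n)" and B: "B \<in> P" "p \<in> B" and q: "q \<in> B"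
  shows "conn (gen_arcs n P) p q"
proof -
  have sub: "B \<subseteq> {1..2*n}" using eNNC_sub[OF P B(1)] by simp
  have pair: "{pt p', pt q'} \<in> gen_arcs n P" if "p' \<in> B" "q' \<in> B" "p' \<noteq> q'" for p' q'
  proof (rule gen_intro[OF _ B(1)])
    have "p' \<in> {1..2*n}" "q' \<in> {1..2*n}" using that(1,2) sub by auto
    then show "is_arc n {pt p', pt q'}" using arc_two[OF pt_reg pt_reg that(3)] by simp
    have "pt p' \<in> region B" unfolding region_Un using pt_reg[of p'] that(1) by blast
    moreover have "pt q' \<in> region B" unfolding region_Un using pt_reg[of q'] that(2) by blast
    ultimately show "{pt p', pt q'} \<subseteq> region B" by simp
  qed
  show ?thesis
  proof (cases "p = q")
    case False
    show ?thesis
      by (rule conn_intro[OF pair[OF B(2) q False] _ pt_reg _ pt_reg]) simp_all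
  next
    case True
    show ?thesis
    proof (cases "odd p")
      case o: True
      define i where "i = (p + 1) div 2"
      have r: "Mid i z \<in> reg p" for z unfolding reg_eq i_def using o by simp
      have pr: "p \<in> {1..2*n}" using sub B(2) by blast
      have m0: "Mid i 0 \<in> Mbar n" using reg_Mbar[OF r pr] .
      have m2: "Mid i 2 \<in> Mbar n" using reg_Mbar[OF r pr] .
      have arc: "is_arc n {Mid i 0, Mid i 2}" unfolding is_arc_def
        apply (rule exI[of _ "Mid i 0"], rule exI[of _ "Mid i 2"])
        using m0 m2 by simp
      have "Mid i 0 \<in> region B" unfolding region_Un using r[of 0] B(2) by blast
      moreover have "Mid i 2 \<in> region B" unfolding region_Un using r[of 2] B(2) by blast
      ultimately have "{Mid i 0, Mid i 2} \<subseteq> region B" by simp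
      then have g: "{Mid i 0, Mid i 2} \<in> gen_arcs n P" by (rule gen_intro[OF arc B(1)])
      show ?thesis unfolding True[symmetric]
        by (rule conn_intro[OF g _ r[of 0] _ r[of 0]]) simp_all
    next
      case e: False
      have ev: "\<forall>i. even i \<longrightarrow> {i} \<notin> P" using P unfolding eNNC_def mem_Collect_eq by (rule conjunct2)
      have "{p} \<notin> P" using ev e by blast
      then have "B \<noteq> {p}" using B(1) by blast
      then obtain r where r: "r \<in> B" "r \<noteq> p" using B(2) by blast
      have g: "{pt p, pt r} \<in> gen_arcs n P" using pair[OF B(2) r(1)] r(2) by simp
      show ?thesis unfolding True[symmetric]
        by (rule conn_intro[OF g _ pt_reg _ pt_reg]) simp_all
    qed
  qed
qed

lemma recover:
  assumes P: "P \<in> eNNC (2*n)" and Q: "Q \<in> eNNC (2*n)"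
    and G: "gen_arcs n P = gen_arcs n Q" and B: "B \<in> P"
  shows "B \<in> Q"
proof -
  obtain p where p: "p \<in> B" using eNNC_sub[OF P B] by blast
  have "conn (gen_arcs n Q) p p" using conn_bwd[OF P B p p] G by simp
  then obtain A where A: "A \<in> gen_arcs n Q" "A \<inter> reg p \<noteq> {}" unfolding conn_def by blast
  then obtain B' where B': "B' \<in> Q" "A \<subseteq> region B'" unfolding gen_arcs_def by blast
  obtain x where x: "x \<in> A" "x \<in> reg p" using A by blast
  then obtain p' where "p' \<in> B'" "x \<in> reg p'" using B' region_Un by blast
  then have pB': "p \<in> B'" using x reg_disj by blast
  have "B = B'"
  proof
    show "B \<subseteq> B'"
    proof
      fix q assume "q \<in> B"
      then have "conn (gen_arcs n Q) p q" using conn_bwd[OF P B p] G by simp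
      then show "q \<in> B'" using conn_fwd[OF Q B'(1) pB'] by blast
    qed
    show "B' \<subseteq> B"
    proof
      fix q assume "q \<in> B'"
      then have "conn (gen_arcs n P) p q" using conn_bwd[OF Q B'(1) pB'] G by simp
      then show "q \<in> B" using conn_fwd[OF P B p] by blast
    qed
  qed
  then show ?thesis using B' by simp
qed

theorem lemma4p7:
  fixes n :: nat and P Q :: "nat set set"
  assumes "n \<ge> 1" and "P \<in> eNNC (2 * n)" and "Q \<in> eNNC (2 * n)"
  shows "subcat n P = subcat n Q \<longleftrightarrow> P = Q"
proof
  assume S: "subcat n P = subcat n Q"
  have G: "gen_arcs n P = gen_arcs n Q"
  proof -
    have "A \<in> gen_arcs n P \<longleftrightarrow> {#A#} \<in> subcat n P" for A unfolding subcat_def by simp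
    moreover have "A \<in> gen_arcs n Q \<longleftrightarrow> {#A#} \<in> subcat n Q" for A unfolding subcat_def by simp
    ultimately show ?thesis using S by blast
  qed
  show "P = Q"
    using recover[OF assms(2,3) G] recover[OF assms(3,2) G[symmetric]] by blast
qed simp

end
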